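(* Consider the random basic walk on the integer lattice $\mathbb{Z}^2$ (vertices $\mathbb{Z}^2$, edges between points at Euclidean distance $1$). For any starting vertex and any initial port, the random basic walk cycles with probability $1$.
   Context: Graphs are connected, countable and locally finite; each undirected edge $\{v,w\}$ is regarded as two arcs $v\to w$ and $w\to v$. A labeling assigns, at each vertex $v$ of degree $\deg(v)$, the port numbers $1,\dots,\deg(v)$ bijectively to the arcs leaving $v$ (labels on $v\to w$ and $w\to v$ need not agree). In a random labeling these bijections are chosen uniformly at random, independently for different vertices. Given a labeling, a starting vertex $v_0$ and an initial port $\ell$, the basic walk leaves $v_0$ along the arc labeled $\ell$; thereafter, whenever it enters a vertex $v$ along an arc whose label (at the tail of that arc) is $i$, it leaves $v$ along the arc out of $v$ labeled $(i \bmod \deg(v))+1$. The random basic walk is the basic walk for a random labeling. The walk cycles if some arc is traversed twice in the same direction (equivalently, from some point on the walk is periodic and visits only finitely many vertices); it is transient if it does not cycle, i.e. it visits infinitely many vertices, each only finitely often. *)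

theory Defs
  imports "HOL-Probability.Probability"
begin

type_synonym vertex = "int \<times> int"

definition nbrs :: "vertex \<Rightarrow> vertex set" where
  "nbrs v = {w. (fst w - fst v)^2 + (snd w - snd v)^2 = 1}"

definition deg :: "vertex \<Rightarrow> nat" where
  "deg v = card (nbrs v)"

text \<open>A labeling L assigns to the arc v -> w the port number L v w (at its tail v).\<close>
definition local_labelings :: "vertex \<Rightarrow> (vertex \<Rightarrow> nat) set" where
  "local_labelings v =
     {f. bij_betw f (nbrs v) {1..deg v} \<and> (\<forall>w. w \<notin> nbrs v \<longrightarrow> f w = 0)}"

definition random_labeling :: "(vertex \<Rightarrow> vertex \<Rightarrow> nat) measure" where
  "random_labeling = PiM UNIV (\<lambda>v. measure_pmf (pmf_of_set (local_labelings v)))"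

primrec basic_walk :: "(vertex \<Rightarrow> vertex \<Rightarrow> nat) \<Rightarrow> vertex \<Rightarrow> nat \<Rightarrow> nat \<Rightarrow> vertex \<times> vertex" where
  "basic_walk L v0 l 0 = (v0, THE w. w \<in> nbrs v0 \<and> L v0 w = l)"
| "basic_walk L v0 l (Suc n) =
     (case basic_walk L v0 l n of (v, w) \<Rightarrow>
        (w, THE u. u \<in> nbrs w \<and> L w u = (L v w mod deg w) + 1))"

definition walk_cycles :: "(vertex \<Rightarrow> vertex \<Rightarrow> nat) \<Rightarrow> vertex \<Rightarrow> nat \<Rightarrow> bool" where
  "walk_cycles L v0 l \<longleftrightarrow> (\<exists>m n. m < n \<and> basic_walk L v0 l m = basic_walk L v0 l n)"

end

theory Submission
  imports Defs
begin


lemma sq1_int: fixes a b :: int assumes "a^2 + b^2 = 1"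
  shows "(a = 1 \<and> b = 0) \<or> (a = -1 \<and> b = 0) \<or> (a = 0 \<and> b = 1) \<or> (a = 0 \<and> b = -1)"
proof -
  have "a^2 \<le> 1" "b^2 \<le> 1" using assms by (smt (verit) zero_le_power2)+
  hence "\<bar>a\<bar> \<le> 1" "\<bar>b\<bar> \<le> 1" by (simp_all add: abs_square_le_1)
  hence "a \<in> {-1,0,1}" "b \<in> {-1,0,1}" by auto
  thus ?thesis using assms by auto
qed

lemma nbrs_eq: "nbrs (a,b) = {(a+1,b),(a-1,b),(a,b+1),(a,b-1)}"
proof -
  have "w \<in> nbrs (a,b) \<longleftrightarrow> w \<in> {(a+1,b),(a-1,b),(a,b+1),(a,b-1)}" for w
  proof (cases w)
    case (Pair x y)
    show ?thesis
    proof
      assume "w \<in> nbrs (a,b)"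
      hence "(x-a)^2 + (y-b)^2 = 1" using Pair by (simp add: nbrs_def)
      from sq1_int[OF this] show "w \<in> {(a+1,b),(a-1,b),(a,b+1),(a,b-1)}" using Pair by auto
    qed (auto simp: nbrs_def Pair)
  qed
  thus ?thesis by blast
qed

lemma deg4: "deg v = 4"
  by (cases v) (simp add: deg_def nbrs_eq)

lemma finite_nbrs: "finite (nbrs v)"
  by (cases v) (simp add: nbrs_eq)

lemma nbrs_sym: "w \<in> nbrs v \<Longrightarrow> v \<in> nbrs w"
  by (auto simp: nbrs_def power2_commute)

lemma nbrs_ne: "w \<in> nbrs v \<Longrightarrow> w \<noteq> v"
  by (auto simp: nbrs_def)

lemma nbrs_step: "w \<in> nbrs v \<Longrightarrow> \<bar>fst w - fst v\<bar> + \<bar>snd w - snd v\<bar> = 1"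
  by (cases v; cases w) (auto simp: nbrs_eq)


definition P :: "nat \<Rightarrow> nat \<Rightarrow> nat" where "P l t = (l - 1 + t) mod 4 + 1"
definition nxt :: "(vertex \<Rightarrow> vertex \<Rightarrow> nat) \<Rightarrow> vertex \<Rightarrow> nat \<Rightarrow> vertex" where
  "nxt L x p = (THE w. w \<in> nbrs x \<and> L x w = p)"

lemma P_range: "P l t \<in> {1..4}" by (simp add: P_def)
lemma P_Suc: "P l t mod 4 + 1 = P l (Suc t)"
  unfolding P_def by (simp add: mod_Suc_eq)
lemma P_0: "l \<in> {1..4} \<Longrightarrow> P l 0 = l" unfolding P_def by (subst mod_less) auto
lemma mod4_r: "s mod 4 = t mod (4::nat) \<Longrightarrow> (c+s) mod 4 = (c+t) mod 4"
  by (metis mod_add_right_eq)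
lemma mod4_iff: "(c+s) mod 4 = (c+t) mod (4::nat) \<longleftrightarrow> s mod 4 = t mod 4"
proof
  assume h: "(c+s) mod 4 = (c+t) mod (4::nat)"
  have "s mod 4 = (3*c + (c+s)) mod 4" by (simp add: algebra_simps)
  also have "\<dots> = (3*c + (c+t)) mod 4" using mod4_r[OF h] .
  also have "\<dots> = t mod 4" by (simp add: algebra_simps)
  finally show "s mod 4 = t mod 4" .
qed (rule mod4_r)
lemma P_eq_iff: "P l s = P l t \<longleftrightarrow> s mod 4 = t mod 4"
  unfolding P_def using mod4_iff by simp

lemma LL_D: assumes "f \<in> local_labelings v"
  shows LL_bij: "bij_betw f (nbrs v) {1..4}" and LL_out: "w \<notin> nbrs v \<Longrightarrow> f w = 0"
proof -
  have h: "bij_betw f (nbrs v) {1..deg v} \<and> (\<forall>w. w \<notin> nbrs v \<longrightarrow> f w = 0)"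
    using assms unfolding local_labelings_def by (rule CollectD)
  show "bij_betw f (nbrs v) {1..4}" using conjunct1[OF h] unfolding deg4 .
  show "w \<notin> nbrs v \<Longrightarrow> f w = 0" using conjunct2[OF h] by (elim allE[of _ w] mp)
qed
lemma LL_I: assumes "bij_betw f (nbrs v) {1..4}" "\<And>w. w \<notin> nbrs v \<Longrightarrow> f w = 0"
  shows "f \<in> local_labelings v"
  unfolding local_labelings_def deg4 using assms by (intro CollectI conjI allI impI)
lemma LL_val: "f \<in> local_labelings v \<Longrightarrow> w \<in> nbrs v \<Longrightarrow> f w \<in> {1..4}"
  by (rule bij_betw_apply[OF LL_bij])
lemma LL_ex: assumes "f \<in> local_labelings v" "p \<in> {1..4}" shows "\<exists>w\<in>nbrs v. f w = p"
  using bij_betw_imp_surj_on[OF LL_bij[OF assms(1)]] assms(2) by (metis imageE)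
lemma LL_inj: assumes "f \<in> local_labelings v" "w \<in> nbrs v" "w' \<in> nbrs v" "f w = f w'" shows "w = w'"
  using bij_betw_imp_inj_on[OF LL_bij[OF assms(1)]] assms(4,2,3) by (rule inj_onD)

lemma nxt_eqI: assumes "L x \<in> local_labelings x" "y \<in> nbrs x" "L x y = p" shows "nxt L x p = y"
  unfolding nxt_def
proof (rule the_equality)
  show "y \<in> nbrs x \<and> L x y = p" using assms(2,3) by simp
  fix w assume "w \<in> nbrs x \<and> L x w = p" thus "w = y" using LL_inj[OF assms(1), of w y] assms(2,3) by simp
qed

lemma nxt_valid: assumes "L x \<in> local_labelings x" "p \<in> {1..4}"
  shows "nxt L x p \<in> nbrs x \<and> L x (nxt L x p) = p"
proof -
  obtain w where w: "w \<in> nbrs x" "L x w = p" using LL_ex[OF assms] by blast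
  thus ?thesis using nxt_eqI[of L x w p] assms w by simp
qed

lemma nxt_inv: "L x \<in> local_labelings x \<Longrightarrow> y \<in> nbrs x \<Longrightarrow> nxt L x (L x y) = y"
  by (rule nxt_eqI[OF _ _ refl])

lemma mk_label:
  assumes "nbrs v = {y1,y2,y3,y4}" "distinct [y1,y2,y3,y4]"
    "{p1,p2,p3,p4} = {1..4::nat}" "distinct [p1,p2,p3,p4]"
  shows "(\<lambda>y. if y = y1 then p1 else if y = y2 then p2 else if y = y3 then p3 else if y = y4 then p4 else 0)
     \<in> local_labelings v"
proof -
  let ?f = "(\<lambda>y. if y = y1 then p1 else if y = y2 then p2 else if y = y3 then p3 else if y = y4 then p4 else 0)"
  have d: "y1\<noteq>y2" "y1\<noteq>y3" "y1\<noteq>y4" "y2\<noteq>y3" "y2\<noteq>y4" "y3\<noteq>y4" using assms(2) by simp_all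
  have m: "map ?f [y1,y2,y3,y4] = [p1,p2,p3,p4]" using d by (simp add: d[symmetric])
  have "distinct (map ?f [y1,y2,y3,y4])" using assms(4) by (simp only: m)
  hence "inj_on ?f (set [y1,y2,y3,y4])" using distinct_map by blast
  hence A: "inj_on ?f (nbrs v)" using assms(1) by simp
  have "?f ` (set [y1,y2,y3,y4]) = set [p1,p2,p3,p4]"
    by (simp only: list.set_map[symmetric] m)
  hence B: "?f ` nbrs v = {1..deg v}" using assms(1,3) deg4[of v] by (simp only: list.set)
  have C: "\<forall>w. w \<notin> nbrs v \<longrightarrow> ?f w = 0" using assms(1) by simp
  show ?thesis
  proof (rule LL_I)
    show "bij_betw ?f (nbrs v) {1..4}" unfolding bij_betw_def using A B deg4[of v] by simp
    show "\<And>w. w \<notin> nbrs v \<Longrightarrow> ?f w = 0" using C by blast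
  qed
qed
lemma swap_label:
  assumes f: "f \<in> local_labelings x" and a: "a \<in> nbrs x" and b: "b \<in> nbrs x"
  shows "(\<lambda>y. if y = a then f b else if y = b then f a else f y) \<in> local_labelings x"
proof -
  define \<tau> where "\<tau> = (\<lambda>y::vertex. if y = a then b else if y = b then a else y)"
  have gdef: "(\<lambda>y. if y = a then f b else if y = b then f a else f y) = f \<circ> \<tau>"
    unfolding \<tau>_def by (rule ext) simp
  have inv: "\<tau> (\<tau> y) = y" for y unfolding \<tau>_def by simp
  have inj\<tau>: "inj_on \<tau> (nbrs x)" by (metis inv inj_onI)
  have \<tau>in: "\<tau> y \<in> nbrs x" if "y \<in> nbrs x" for y using a b that unfolding \<tau>_def by (simp split: if_split)
  have im\<tau>: "\<tau> ` nbrs x = nbrs x"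
  proof
    show "\<tau> ` nbrs x \<subseteq> nbrs x" using \<tau>in by blast
    show "nbrs x \<subseteq> \<tau> ` nbrs x"
    proof
      fix y assume y: "y \<in> nbrs x"
      have "\<tau> y \<in> nbrs x" using \<tau>in y by blast
      thus "y \<in> \<tau> ` nbrs x" using inv[of y] by (metis imageI)
    qed
  qed
  have inj: "inj_on f (nbrs x)" and im: "f ` nbrs x = {1..deg x}" and z: "\<forall>w. w \<notin> nbrs x \<longrightarrow> f w = 0"
    using LL_bij[OF f] LL_out[OF f] unfolding bij_betw_def deg4 by simp_all
  have A: "inj_on (f \<circ> \<tau>) (nbrs x)" using inj inj\<tau> im\<tau> by (simp add: comp_inj_on)
  have B: "(f \<circ> \<tau>) ` nbrs x = {1..deg x}" by (simp only: image_comp[symmetric] im\<tau> im)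
  have C: "\<forall>w. w \<notin> nbrs x \<longrightarrow> (f \<circ> \<tau>) w = 0"
  proof (intro allI impI)
    fix w assume w: "w \<notin> nbrs x"
    hence "w \<noteq> a" "w \<noteq> b" using a b by blast+
    hence "\<tau> w = w" unfolding \<tau>_def by simp
    thus "(f \<circ> \<tau>) w = 0" using LL_out[OF f w] by simp
  qed
  show ?thesis unfolding gdef
  proof (rule LL_I)
    show "bij_betw (f \<circ> \<tau>) (nbrs x) {1..4}" unfolding bij_betw_def using A B deg4[of x] by simp
    show "\<And>w. w \<notin> nbrs x \<Longrightarrow> (f \<circ> \<tau>) w = 0" using C by blast
  qed
qed

lemma LL_sub: "(\<lambda>f. restrict f (nbrs v)) ` local_labelings v \<subseteq> PiE (nbrs v) (\<lambda>_. {1..4})"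
proof (rule image_subsetI)
  fix f assume f: "f \<in> local_labelings v"
  show "restrict f (nbrs v) \<in> PiE (nbrs v) (\<lambda>_. {1..4})"
  proof (rule PiE_I)
    fix w assume "w \<in> nbrs v" thus "restrict f (nbrs v) w \<in> {1..4}" using LL_val[OF f] by simp
  qed simp
qed

lemma LL_inj_restrict: "inj_on (\<lambda>f. restrict f (nbrs v)) (local_labelings v)"
proof (rule inj_onI)
  fix f g assume "f \<in> local_labelings v" "g \<in> local_labelings v" "restrict f (nbrs v) = restrict g (nbrs v)"
  thus "f = g" using LL_out by (metis ext restrict_apply')
qed

lemma finite_LL: "finite (local_labelings v)"
proof -
  have "finite (PiE (nbrs v) (\<lambda>_. {1..4::nat}))" by (simp add: finite_PiE finite_nbrs)
  thus ?thesis using LL_sub LL_inj_restrict by (metis finite_imageD finite_subset)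
qed

lemma card_LL: "card (local_labelings v) \<le> 256"
proof -
  have "card (local_labelings v) = card ((\<lambda>f. restrict f (nbrs v)) ` local_labelings v)"
    using LL_inj_restrict by (simp add: card_image)
  also have "\<dots> \<le> card (PiE (nbrs v) (\<lambda>_. {1..4::nat}))"
    by (rule card_mono[OF _ LL_sub]) (simp add: finite_PiE finite_nbrs)
  also have "\<dots> = 256" by (simp add: card_PiE finite_nbrs deg4[unfolded deg_def])
  finally show ?thesis .
qed

lemma LL_nonempty: "local_labelings v \<noteq> {}"
proof (cases v)
  case (Pair a b)
  have "(\<lambda>y. if y = (a+1,b) then 1 else if y = (a-1,b) then 2 else if y = (a,b+1) then 3 else if y = (a,b-1) then 4 else 0::nat)
     \<in> local_labelings v"
  proof (rule mk_label)
    show "nbrs v = {(a+1,b),(a-1,b),(a,b+1),(a,b-1)}" by (simp add: Pair nbrs_eq)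
    show "distinct [(a+1,b),(a-1,b),(a,b+1),(a,b-1)]" by simp
    show "{1,2,3,4} = {1..4::nat}" by (simp add: atLeastAtMostSuc_conv numeral_eq_Suc insert_commute)
    show "distinct [1,2,3,4::nat]" by simp
  qed
  thus ?thesis by blast
qed


locale walk = fixes v0 :: vertex and l :: nat
begin

primrec pos :: "(vertex \<Rightarrow> vertex \<Rightarrow> nat) \<Rightarrow> nat \<Rightarrow> vertex" where
  "pos L 0 = v0"
| "pos L (Suc t) = nxt L (pos L t) (P l t)"

definition arc :: "(vertex \<Rightarrow> vertex \<Rightarrow> nat) \<Rightarrow> nat \<Rightarrow> vertex \<times> vertex" where
  "arc L t = (pos L t, pos L (Suc t))"
definition norep :: "(vertex \<Rightarrow> vertex \<Rightarrow> nat) \<Rightarrow> nat \<Rightarrow> bool" where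
  "norep L n = (\<forall>m n'. m < n' \<longrightarrow> n' \<le> n \<longrightarrow> arc L m \<noteq> arc L n')"
definition fresh :: "(vertex \<Rightarrow> vertex \<Rightarrow> nat) \<Rightarrow> nat \<Rightarrow> bool" where
  "fresh L t = (pos L t \<notin> pos L ` {..<t})"
definition cnt :: "(vertex \<Rightarrow> vertex \<Rightarrow> nat) \<Rightarrow> nat \<Rightarrow> nat" where
  "cnt L t = card (pos L ` {..<t})"
definition Ep :: "nat \<Rightarrow> nat \<Rightarrow> (vertex \<Rightarrow> vertex \<Rightarrow> nat) \<Rightarrow> bool" where
  "Ep k B L = (\<exists>t\<le>B. 1 \<le> t \<and> fresh L t \<and> cnt L t = k \<and> norep L (t - 1))"
definition E :: "nat \<Rightarrow> nat \<Rightarrow> (vertex \<Rightarrow> vertex \<Rightarrow> nat) \<Rightarrow> bool" where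
  "E k B L = (\<exists>t\<le>B. 1 \<le> t \<and> fresh L t \<and> cnt L t = k \<and> norep L (t + 3))"

lemma pos_local:
  assumes "\<And>s. s < t \<Longrightarrow> nxt L' (pos L s) (P l s) = nxt L (pos L s) (P l s)"
  shows "s \<le> t \<Longrightarrow> pos L' s = pos L s"
proof (induction s)
  case (Suc s) thus ?case using assms[of s] by simp
qed simp

lemma norep_mono: "norep L n \<Longrightarrow> m \<le> n \<Longrightarrow> norep L m"
  unfolding norep_def by (meson order_trans)

lemma cnt_Suc: "cnt L (Suc t) = (if fresh L t then Suc (cnt L t) else cnt L t)"
proof -
  have "pos L ` {..<Suc t} = insert (pos L t) (pos L ` {..<t})" by (simp add: lessThan_Suc)
  thus ?thesis unfolding cnt_def fresh_def by (simp add: card_insert_if)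
qed

lemma cnt_0: "cnt L 0 = 0" by (simp add: cnt_def)
lemma cnt_1: "cnt L 1 = 1" by (simp add: cnt_def lessThan_Suc)

lemma cnt_Suc_le: "cnt L (Suc t) \<le> Suc (cnt L t)" by (simp add: cnt_Suc)
lemma cnt_mono: "s \<le> t \<Longrightarrow> cnt L s \<le> cnt L t"
  unfolding cnt_def by (intro card_mono) (simp_all add: image_mono)

lemma cnt_le_add: "s \<le> t \<Longrightarrow> cnt L t \<le> cnt L s + (t - s)"
proof (induction t)
  case 0 thus ?case by simp
next
  case (Suc t)
  show ?case
  proof (cases "s \<le> t")
    case True
    hence "cnt L t \<le> cnt L s + (t - s)" using Suc.IH by simp
    thus ?thesis using cnt_Suc_le[of L t] True by simp
  next
    case False hence "s = Suc t" using Suc.prems by simp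
    thus ?thesis by simp
  qed
qed

lemma cnt_less_fresh: assumes "s < t" "fresh L s" shows "cnt L s < cnt L t"
proof -
  have "pos L ` {..<s} \<subset> pos L ` {..<t}"
  proof
    show "pos L ` {..<s} \<subseteq> pos L ` {..<t}" using assms(1) by (intro image_mono) simp
    show "pos L ` {..<s} \<noteq> pos L ` {..<t}"
      using assms unfolding fresh_def by (metis image_eqI lessThan_iff)
  qed
  thus ?thesis unfolding cnt_def by (intro psubset_card_mono) simp_all
qed

lemma fresh_unique: assumes "fresh L s" "fresh L t" "cnt L s = cnt L t" shows "s = t"
proof (rule ccontr)
  assume "s \<noteq> t"
  hence "s < t \<or> t < s" by arith
  thus False using cnt_less_fresh[of s t L] cnt_less_fresh[of t s L] assms by (metis less_irrefl)
qed

lemma ivt: assumes "1 \<le> k" "k < cnt L t" shows "\<exists>s<t. 1 \<le> s \<and> fresh L s \<and> cnt L s = k"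
proof -
  define r where "r = (LEAST r. k < cnt L r)"
  have r1: "k < cnt L r" unfolding r_def by (rule LeastI[of _ t]) (rule assms(2))
  have r2: "r \<le> t" unfolding r_def by (rule Least_le) (rule assms(2))
  have r3: "cnt L r' \<le> k" if "r' < r" for r'
  proof -
    have "\<not> k < cnt L r'" using not_less_Least[of r' "\<lambda>r. k < cnt L r"] that unfolding r_def by blast
    thus ?thesis by simp
  qed
  have "r \<noteq> 0" proof assume "r = 0" thus False using r1 cnt_0[of L] by simp qed
  moreover have "r \<noteq> 1" proof assume "r = 1" thus False using r1 cnt_1[of L] assms(1) by simp qed
  ultimately obtain s where s: "r = Suc s" "1 \<le> s" by (intro that[of "r - 1"]) simp_all
  have "cnt L s \<le> k" using r3[of s] s by simp
  moreover have "cnt L (Suc s) \<le> Suc (cnt L s)" by (rule cnt_Suc_le)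
  ultimately have "cnt L s = k" "cnt L (Suc s) \<noteq> cnt L s" using r1 s by simp_all
  hence "fresh L s" using cnt_Suc[of L s] by (simp split: if_splits)
  thus ?thesis using \<open>cnt L s = k\<close> s r2 by (intro exI[of _ s]) simp
qed

lemma Ep_E: assumes "1 \<le> k" "Ep (k+4) B L" shows "E k B L"
proof -
  obtain t where t: "t \<le> B" "1 \<le> t" "fresh L t" "cnt L t = k + 4" "norep L (t - 1)"
    using assms(2) unfolding Ep_def by blast
  have "k < cnt L t" using t(4) by simp
  from ivt[OF assms(1) this] obtain s where s: "s < t" "1 \<le> s" "fresh L s" "cnt L s = k" by blast
  have "cnt L t \<le> cnt L s + (t - s)" using cnt_le_add[of s t L] s(1) by simp
  hence "s + 3 \<le> t - 1" using t(4) s(4) s(1) by simp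
  hence "norep L (s+3)" using norep_mono t(5) by blast
  thus ?thesis unfolding E_def using s t by (intro exI[of _ s]) simp
qed

lemma E_Ep: assumes "E k B L" shows "Ep k B L"
proof -
  obtain t where t: "t \<le> B" "1 \<le> t" "fresh L t" "cnt L t = k" "norep L (t + 3)" using assms unfolding E_def by blast
  have "norep L (t - 1)" using norep_mono[OF t(5)] by simp
  thus ?thesis unfolding Ep_def using t by (intro exI[of _ t]) simp
qed

lemma Ep_mono: assumes "Ep k B L" "B \<le> B'" shows "Ep k B' L"
proof -
  obtain t where "t \<le> B" "1 \<le> t \<and> fresh L t \<and> cnt L t = k \<and> norep L (t - 1)" using assms(1) unfolding Ep_def by blast
  thus ?thesis unfolding Ep_def using assms(2) by (intro exI[of _ t]) simp
qed

lemma cong_lemmas: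
  assumes "\<And>s. s \<le> n \<Longrightarrow> pos L' s = pos L s"
  shows fresh_cong: "t \<le> n \<Longrightarrow> fresh L' t = fresh L t"
    and cnt_cong: "t \<le> n \<Longrightarrow> cnt L' t = cnt L t"
    and norep_cong: "m < n \<Longrightarrow> norep L' m = norep L m"
proof -
  have im: "t \<le> n \<Longrightarrow> pos L' ` {..<t} = pos L ` {..<t}" for t using assms by (intro image_cong refl) simp
  show "t \<le> n \<Longrightarrow> fresh L' t = fresh L t" unfolding fresh_def using im assms by simp
  show "t \<le> n \<Longrightarrow> cnt L' t = cnt L t" unfolding cnt_def using im by simp
  show "m < n \<Longrightarrow> norep L' m = norep L m"
  proof -
    assume m: "m < n"
    have arceq: "arc L' a = arc L a" if "a \<le> m" for a
      unfolding arc_def using assms[of a] assms[of "Suc a"] that m by (simp del: pos.simps)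
    show ?thesis unfolding norep_def
    proof (intro iffI allI impI)
      fix a b assume H: "\<forall>a b. a < b \<longrightarrow> b \<le> m \<longrightarrow> arc L' a \<noteq> arc L' b" "a < b" "b \<le> m"
      hence "a \<le> m" by simp
      thus "arc L a \<noteq> arc L b" using H arceq[of a] arceq[of b] by metis
    next
      fix a b assume H: "\<forall>a b. a < b \<longrightarrow> b \<le> m \<longrightarrow> arc L a \<noteq> arc L b" "a < b" "b \<le> m"
      hence "a \<le> m" by simp
      thus "arc L' a \<noteq> arc L' b" using H arceq[of a] arceq[of b] by metis
    qed
  qed
qed

lemma Ep_cong: assumes "\<And>s. s \<le> B + 4 \<Longrightarrow> pos L' s = pos L s" shows "Ep k B L' = Ep k B L"
proof -
  have h: "\<And>t. t \<le> B \<Longrightarrow> (1 \<le> t \<and> fresh L' t \<and> cnt L' t = k \<and> norep L' (t - 1)) = (1 \<le> t \<and> fresh L t \<and> cnt L t = k \<and> norep L (t - 1))"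
    using cong_lemmas[OF assms] by simp
  show ?thesis unfolding Ep_def
  proof
    assume "\<exists>t\<le>B. 1 \<le> t \<and> fresh L' t \<and> cnt L' t = k \<and> norep L' (t - 1)"
    then obtain t where "t \<le> B" "1 \<le> t \<and> fresh L' t \<and> cnt L' t = k \<and> norep L' (t - 1)" by blast
    thus "\<exists>t\<le>B. 1 \<le> t \<and> fresh L t \<and> cnt L t = k \<and> norep L (t - 1)" using h by blast
  next
    assume "\<exists>t\<le>B. 1 \<le> t \<and> fresh L t \<and> cnt L t = k \<and> norep L (t - 1)"
    then obtain t where "t \<le> B" "1 \<le> t \<and> fresh L t \<and> cnt L t = k \<and> norep L (t - 1)" by blast
    thus "\<exists>t\<le>B. 1 \<le> t \<and> fresh L' t \<and> cnt L' t = k \<and> norep L' (t - 1)" using h by blast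
  qed
qed

lemma E_cong: assumes "\<And>s. s \<le> B + 4 \<Longrightarrow> pos L' s = pos L s" shows "E k B L' = E k B L"
proof -
  have h: "\<And>t. t \<le> B \<Longrightarrow> (1 \<le> t \<and> fresh L' t \<and> cnt L' t = k \<and> norep L' (t + 3)) = (1 \<le> t \<and> fresh L t \<and> cnt L t = k \<and> norep L (t + 3))"
    using cong_lemmas[OF assms] by simp
  show ?thesis unfolding E_def
  proof
    assume "\<exists>t\<le>B. 1 \<le> t \<and> fresh L' t \<and> cnt L' t = k \<and> norep L' (t + 3)"
    then obtain t where "t \<le> B" "1 \<le> t \<and> fresh L' t \<and> cnt L' t = k \<and> norep L' (t + 3)" by blast
    thus "\<exists>t\<le>B. 1 \<le> t \<and> fresh L t \<and> cnt L t = k \<and> norep L (t + 3)" using h by blast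
  next
    assume "\<exists>t\<le>B. 1 \<le> t \<and> fresh L t \<and> cnt L t = k \<and> norep L (t + 3)"
    then obtain t where "t \<le> B" "1 \<le> t \<and> fresh L t \<and> cnt L t = k \<and> norep L (t + 3)" by blast
    thus "\<exists>t\<le>B. 1 \<le> t \<and> fresh L' t \<and> cnt L' t = k \<and> norep L' (t + 3)" using h by blast
  qed
qed

end


context walk begin

definition box :: "int \<Rightarrow> vertex set" where
  "box R = {v. \<bar>fst v - fst v0\<bar> \<le> R \<and> \<bar>snd v - snd v0\<bar> \<le> R}"

lemma finite_box: "finite (box R)"
proof -
  have "box R \<subseteq> {fst v0 - R..fst v0 + R} \<times> {snd v0 - R..snd v0 + R}"
    unfolding box_def by (auto simp: abs_le_iff)
  thus ?thesis by (rule finite_subset) simp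
qed

lemma box_mono: "R \<le> R' \<Longrightarrow> box R \<subseteq> box R'"
  unfolding box_def by auto

lemma pos_step: assumes "L (pos L t) \<in> local_labelings (pos L t)"
  shows "pos L (Suc t) \<in> nbrs (pos L t)" "L (pos L t) (pos L (Suc t)) = P l t"
  using nxt_valid[of L "pos L t" "P l t", OF assms P_range] by simp_all

lemma pos_box: assumes "\<forall>x\<in>box R. L x \<in> local_labelings x" "int t \<le> R + 1"
  shows "pos L t \<in> box (int t)"
  using assms(2)
proof (induction t)
  case 0 thus ?case by (simp add: box_def)
next
  case (Suc t)
  have "pos L t \<in> box (int t)" using Suc by simp
  moreover have "box (int t) \<subseteq> box R" using Suc.prems by (intro box_mono) simp
  ultimately have v: "L (pos L t) \<in> local_labelings (pos L t)" using assms(1) by blast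
  have st: "\<bar>fst (pos L (Suc t)) - fst (pos L t)\<bar> + \<bar>snd (pos L (Suc t)) - snd (pos L t)\<bar> = 1"
    using nbrs_step[OF pos_step(1)[OF v]] .
  have "\<bar>fst (pos L t) - fst v0\<bar> \<le> int t" "\<bar>snd (pos L t) - snd v0\<bar> \<le> int t"
    using \<open>pos L t \<in> box (int t)\<close> unfolding box_def by simp_all
  hence "\<bar>fst (pos L (Suc t)) - fst v0\<bar> \<le> int (Suc t) \<and> \<bar>snd (pos L (Suc t)) - snd v0\<bar> \<le> int (Suc t)"
    using st by arith
  thus ?case unfolding box_def by simp
qed

lemma bw_arc: assumes "\<And>x. L x \<in> local_labelings x" "l \<in> {1..4}"
  shows "basic_walk L v0 l t = arc L t"
proof (induction t)
  case 0
  show ?case unfolding arc_def by (simp add: nxt_def P_0[OF assms(2)])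
next
  case (Suc t)
  have lab: "L (pos L t) (pos L (Suc t)) = P l t" using pos_step(2)[OF assms(1)] .
  have "basic_walk L v0 l (Suc t) = (pos L (Suc t), THE u. u \<in> nbrs (pos L (Suc t)) \<and>
      L (pos L (Suc t)) u = L (pos L t) (pos L (Suc t)) mod deg (pos L (Suc t)) + 1)"
    using Suc unfolding arc_def by (simp del: pos.simps)
  also have "\<dots> = (pos L (Suc t), nxt L (pos L (Suc t)) (P l (Suc t)))"
    unfolding lab deg4 P_Suc nxt_def ..
  also have "\<dots> = arc L (Suc t)" unfolding arc_def by simp
  finally show ?case .
qed

lemma cycles_iff: assumes "\<And>x. L x \<in> local_labelings x" "l \<in> {1..4}"
  shows "walk_cycles L v0 l \<longleftrightarrow> \<not> (\<forall>n. norep L n)"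
  unfolding walk_cycles_def norep_def bw_arc[OF assms] by (meson order_refl)

lemma norep_infinite: assumes "\<forall>n. norep L n" shows "infinite (range (pos L))"
proof
  assume fin: "finite (range (pos L))"
  let ?f = "\<lambda>t. (pos L t, t mod 4)"
  have "?f ` UNIV \<subseteq> range (pos L) \<times> {..<4}" by auto
  hence "finite (?f ` UNIV)" using fin by (meson finite_SigmaI finite_lessThan finite_subset)
  hence "\<not> inj ?f" using finite_imageD infinite_UNIV_nat by blast
  then obtain m n where mn: "m \<noteq> n" "?f m = ?f n" unfolding inj_def by blast
  have key: "arc L a = arc L b" if "?f a = ?f b" for a b
  proof -
    have "P l a = P l b" using that P_eq_iff by simp
    thus ?thesis using that unfolding arc_def by simp
  qed
  show False
  proof (cases "m < n")
    case True thus False using assms key[OF mn(2)] unfolding norep_def by blast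
  next
    case False hence "n < m" using mn(1) by simp
    thus False using assms key[OF mn(2)[symmetric]] unfolding norep_def by blast
  qed
qed

lemma cnt_unbounded: assumes "infinite (range (pos L))" shows "\<exists>T. m < cnt L T"
proof -
  obtain S where S: "S \<subseteq> range (pos L)" "finite S" "card S = Suc m"
    using infinite_arbitrarily_large[OF assms] by blast
  obtain C where C: "C \<subseteq> UNIV" "finite C" "S = pos L ` C"
    using finite_subset_image[OF S(2) S(1)] by blast
  define T where "T = Suc (Max (insert 0 C))"
  have "C \<subseteq> {..<T}" unfolding T_def using C(2) by (auto simp: less_Suc_eq_le)
  hence "S \<subseteq> pos L ` {..<T}" using C(3) by auto
  hence "card S \<le> cnt L T" unfolding cnt_def by (intro card_mono) simp_all
  thus ?thesis using S(3) by (intro exI[of _ T]) simp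
qed

lemma noc_Ep: assumes "\<forall>n. norep L n" "1 \<le> k" shows "\<exists>B. Ep k B L"
proof -
  obtain T where "k < cnt L T" using cnt_unbounded[OF norep_infinite[OF assms(1)]] by blast
  then obtain s where s: "s < T" "1 \<le> s" "fresh L s" "cnt L s = k" using ivt[OF assms(2)] by blast
  thus ?thesis unfolding Ep_def using assms(1) by (intro exI[of _ s] exI[of _ s]) simp
qed

end


definition ahead :: "vertex \<Rightarrow> vertex \<Rightarrow> vertex" where
  "ahead u v = (2 * fst v - fst u, 2 * snd v - snd u)"
definition left :: "vertex \<Rightarrow> vertex \<Rightarrow> vertex" where
  "left u v = (fst v - (snd v - snd u), snd v + (fst v - fst u))"
definition right :: "vertex \<Rightarrow> vertex \<Rightarrow> vertex" where
  "right u v = (fst v + (snd v - snd u), snd v - (fst v - fst u))"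

lemma geo: assumes "u \<in> nbrs v"
  shows "nbrs v = {ahead u v, u, left u v, right u v}" "distinct [ahead u v, u, left u v, right u v]"
proof -
  obtain a b where v: "v = (a,b)" by (cases v)
  have "u \<in> {(a+1,b),(a-1,b),(a,b+1),(a,b-1)}" using assms v nbrs_eq by simp
  hence "u = (a+1,b) \<or> u = (a-1,b) \<or> u = (a,b+1) \<or> u = (a,b-1)" by simp
  hence "nbrs v = {ahead u v, u, left u v, right u v} \<and> distinct [ahead u v, u, left u v, right u v]"
  proof (elim disjE)
    assume u: "u = (a+1,b)"
    show ?thesis unfolding u v ahead_def left_def right_def nbrs_eq by (simp add: insert_commute)
  next
    assume u: "u = (a-1,b)"
    show ?thesis unfolding u v ahead_def left_def right_def nbrs_eq by (simp add: insert_commute)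
  next
    assume u: "u = (a,b+1)"
    show ?thesis unfolding u v ahead_def left_def right_def nbrs_eq by (simp add: insert_commute)
  next
    assume u: "u = (a,b-1)"
    show ?thesis unfolding u v ahead_def left_def right_def nbrs_eq by (simp add: insert_commute)
  qed
  thus "nbrs v = {ahead u v, u, left u v, right u v}" "distinct [ahead u v, u, left u v, right u v]" by simp_all
qed

lemma P_ne: assumes "i < 4" "j < 4" "i \<noteq> j" shows "P l (t + i) \<noteq> P l (t + j)"
  unfolding P_eq_iff mod4_iff using assms by simp

lemma four: assumes "distinct [a,b,c,d]" "{a,b,c,d} \<subseteq> {1..4::nat}" shows "{a,b,c,d} = {1..4}"
proof (rule card_subset_eq)
  show "card {a,b,c,d} = card {1..4::nat}" using distinct_card[OF assms(1)] by simp
qed (simp, rule assms(2))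

lemma P4: "{P l t, P l (t+2), P l (t+1), P l (t+3)} = {1..4} \<and> distinct [P l t, P l (t+2), P l (t+1), P l (t+3)]"
proof -
  have d: "distinct [P l t, P l (t+2), P l (t+1), P l (t+3)]"
    using P_ne[of 0 2 l t] P_ne[of 0 1 l t] P_ne[of 0 3 l t] P_ne[of 2 1 l t] P_ne[of 2 3 l t] P_ne[of 1 3 l t]
    by simp
  have "{P l t, P l (t+2), P l (t+1), P l (t+3)} \<subseteq> {1..4}" using P_range by simp
  thus ?thesis using four d by blast
qed


lemma nxt_cong: "L' x = L x \<Longrightarrow> nxt L' x p = nxt L x p"
  unfolding nxt_def by simp

context walk begin

definition lv :: "vertex \<Rightarrow> vertex \<Rightarrow> nat \<Rightarrow> vertex \<Rightarrow> nat" where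
  "lv u v t = (\<lambda>y. if y = ahead u v then P l t else if y = u then P l (t+2)
      else if y = left u v then P l (t+1) else if y = right u v then P l (t+3) else 0)"

definition rev :: "(vertex \<Rightarrow> vertex \<Rightarrow> nat) \<Rightarrow> vertex \<Rightarrow> nat \<Rightarrow> bool" where
  "rev L w t = (\<exists>s<t. pos L s = w \<and> s mod 4 = (t+1) mod 4)"

definition lw :: "(vertex \<Rightarrow> vertex \<Rightarrow> nat) \<Rightarrow> vertex \<Rightarrow> vertex \<Rightarrow> nat \<Rightarrow> vertex \<Rightarrow> nat" where
  "lw L v w t = (if rev L w t then L w else
     (\<lambda>y. if y = v then L w (nxt L w (P l (t+1))) else if y = nxt L w (P l (t+1)) then L w v else L w y))"

definition modf :: "(vertex \<Rightarrow> vertex \<Rightarrow> nat) \<Rightarrow> nat \<Rightarrow> vertex \<Rightarrow> vertex \<Rightarrow> nat" where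
  "modf L t = L(pos L t := lv (pos L (t-1)) (pos L t) t,
                ahead (pos L (t-1)) (pos L t) := lw L (pos L t) (ahead (pos L (t-1)) (pos L t)) t)"

lemma modf_props:
  assumes hv: "\<And>s. s \<le> t \<Longrightarrow> L (pos L s) \<in> local_labelings (pos L s)"
    and hw: "L (ahead (pos L (t-1)) (pos L t)) \<in> local_labelings (ahead (pos L (t-1)) (pos L t))"
    and t1: "1 \<le> t" and fr: "fresh L t"
  defines "u \<equiv> pos L (t-1)" and "v \<equiv> pos L t" and "w \<equiv> ahead (pos L (t-1)) (pos L t)"
  shows "modf L t v \<in> local_labelings v" "modf L t w \<in> local_labelings w"
    "\<And>x. x \<noteq> v \<Longrightarrow> x \<noteq> w \<Longrightarrow> modf L t x = L x"
    "\<And>s. s \<le> t \<Longrightarrow> pos (modf L t) s = pos L s"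
    "\<not> norep (modf L t) (t+3)"
proof -
  let ?L' = "modf L t"
  have tS: "Suc (t-1) = t" using t1 by simp
  have hw': "L w \<in> local_labelings w" using hw unfolding w_def .
  have vu: "v \<in> nbrs u" "L u v = P l (t-1)"
    using pos_step[of L "t-1", OF hv[of "t-1"]] unfolding u_def v_def tS by simp_all
  have uv: "u \<in> nbrs v" using nbrs_sym[OF vu(1)] .
  note g = geo[OF uv]
  have wa: "w = ahead u v" unfolding w_def u_def v_def ..
  have wn: "w \<in> nbrs v" using g(1) wa by simp
  have wu: "w \<noteq> u" using g(2) wa by simp
  have wv: "w \<noteq> v" using nbrs_ne[OF wn] .
  have vw: "v \<in> nbrs w" using nbrs_sym[OF wn] .
  have Lv: "?L' v = lv u v t" unfolding modf_def u_def v_def w_def using wv[unfolded w_def v_def] by simp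
  have Lw: "?L' w = lw L v w t" unfolding modf_def u_def v_def w_def by simp
  have Lx: "?L' x = L x" if "x \<noteq> v" "x \<noteq> w" for x
    using that unfolding modf_def u_def v_def w_def by simp
  show "\<And>x. x \<noteq> v \<Longrightarrow> x \<noteq> w \<Longrightarrow> modf L t x = L x" by (rule Lx)
  have lvLL: "lv u v t \<in> local_labelings v"
    unfolding lv_def wa[symmetric] using mk_label[OF g(1) g(2) conjunct1[OF P4] conjunct2[OF P4]] wa by simp
  show LvLL: "?L' v \<in> local_labelings v" using Lv lvLL by simp
  define d where "d = nxt L w (P l (t+1))"
  have dd: "d \<in> nbrs w" "L w d = P l (t+1)" using nxt_valid[of L w "P l (t+1)", OF hw' P_range] unfolding d_def by simp_all
  have lw_nr: "lw L v w t = (\<lambda>y. if y = v then L w d else if y = d then L w v else L w y)" if "\<not> rev L w t"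
    unfolding lw_def d_def using that by simp
  have lw_r: "lw L v w t = L w" if "rev L w t" unfolding lw_def using that by simp
  have lwLL: "lw L v w t \<in> local_labelings w"
  proof (cases "rev L w t")
    case True thus ?thesis using lw_r hw' by simp
  next
    case False thus ?thesis using lw_nr swap_label[OF hw' vw dd(1)] by simp
  qed
  show LwLL: "?L' w \<in> local_labelings w" using Lw lwLL by simp
  have hist: "nxt ?L' (pos L s) (P l s) = nxt L (pos L s) (P l s)" if s: "s < t" for s
  proof -
    let ?x = "pos L s"
    have xv: "?x \<noteq> v" using fr s unfolding fresh_def v_def by (metis image_eqI lessThan_iff)
    show ?thesis
    proof (cases "?x = w")
      case False show ?thesis using Lx[OF xv False] by (rule nxt_cong)
    next
      case xw: True
      show ?thesis
      proof (cases "rev L w t")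
        case True thus ?thesis using Lw lw_r xw by (intro nxt_cong) simp
      next
        case nr: False
        define y0 where "y0 = pos L (Suc s)"
        have y0: "y0 \<in> nbrs w" "L w y0 = P l s" using pos_step[OF hv[of s]] s xw unfolding y0_def by simp_all
        have y0n: "nxt L w (P l s) = y0" unfolding y0_def using xw by simp
        have y0v: "y0 \<noteq> v"
        proof
          assume "y0 = v"
          show False
          proof (cases "Suc s < t")
            case True thus False using fr \<open>y0 = v\<close> unfolding fresh_def y0_def v_def by (metis image_eqI lessThan_iff)
          next
            case False hence "s = t - 1" using s by simp
            thus False using xw wu unfolding u_def by simp
          qed
        qed
        have y0d: "y0 \<noteq> d"
        proof
          assume "y0 = d"
          hence "P l s = P l (t+1)" using y0(2) dd(2) by simp
          hence "s mod 4 = (t+1) mod 4" using P_eq_iff by simp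
          thus False using nr s xw unfolding rev_def by blast
        qed
        have "?L' w y0 = P l s" using Lw lw_nr[OF nr] y0v y0d y0(2) by simp
        hence "nxt ?L' w (P l s) = y0" by (rule nxt_eqI[of "modf L t" w y0, OF LwLL y0(1)])
        thus ?thesis using xw y0n by simp
      qed
    qed
  qed
  show hpos: "\<And>s. s \<le> t \<Longrightarrow> pos ?L' s = pos L s" by (rule pos_local[of t "modf L t" L, OF hist])
  have p0: "pos ?L' t = v" using hpos[of t] unfolding v_def by simp
  have pm1: "pos ?L' (t-1) = u" using hpos[of "t-1"] unfolding u_def by simp
  have pt: "pos ?L' t = nxt ?L' u (P l (t-1))" using pos.simps(2)[of ?L' "t-1"] pm1 tS by simp
  have lvw: "lv u v t w = P l t" unfolding lv_def wa by simp
  have p1: "pos ?L' (Suc t) = w" using p0 nxt_eqI[of "modf L t" v w, OF LvLL wn] Lv lvw by simp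
  have arcm1: "arc ?L' (t-1) = (u, nxt ?L' u (P l (t-1)))" unfolding arc_def pm1 tS pt ..
  show "\<not> norep ?L' (t+3)"
  proof (cases "rev L w t")
    case True
    then obtain s where s: "s < t" "pos L s = w" "s mod 4 = (t+1) mod 4" unfolding rev_def by blast
    have "pos ?L' s = w" using hpos[of s] s by simp
    hence a1: "arc ?L' s = (w, nxt ?L' w (P l s))" unfolding arc_def by simp
    have a2: "arc ?L' (Suc t) = (w, nxt ?L' w (P l (Suc t)))" unfolding arc_def using p1 by simp
    have "P l s = P l (Suc t)" using s(3) P_eq_iff by simp
    hence "arc ?L' s = arc ?L' (Suc t)" using a1 a2 by simp
    show ?thesis
    proof
      assume H: "norep ?L' (t+3)"
      have "arc ?L' s \<noteq> arc ?L' (Suc t)" using H[unfolded norep_def, rule_format, of s "Suc t"] s(1) by simp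
      thus False using \<open>arc ?L' s = arc ?L' (Suc t)\<close> by simp
    qed
  next
    case nr: False
    have "?L' w v = P l (t+1)" using Lw lw_nr[OF nr] dd(2) by simp
    hence "nxt ?L' w (P l (Suc t)) = v" using nxt_eqI[of "modf L t" w v, OF LwLL vw] by simp
    hence p2: "pos ?L' (Suc (Suc t)) = v" using p1 by simp
    have "ahead u v \<noteq> u" using wu wa by simp
    hence lvu: "lv u v t u = P l (t+2)" unfolding lv_def by simp
    hence "nxt ?L' v (P l (Suc (Suc t))) = u" using nxt_eqI[of "modf L t" v u, OF LvLL uv] Lv by simp
    hence p3: "pos ?L' (Suc (Suc (Suc t))) = u" using p2 by simp
    have m: "(t+3) mod 4 = (t-1) mod 4"
    proof -
      have e: "t + 3 = (t - 1) + 4" using t1 by simp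
      show ?thesis unfolding e by (rule mod_add_self2)
    qed
    have s3: "Suc (Suc (Suc t)) = t + 3" by simp
    have "P l (Suc (Suc (Suc t))) = P l (t-1)" unfolding s3 P_eq_iff by (rule m)
    hence "arc ?L' (Suc (Suc (Suc t))) = arc ?L' (t-1)" using arcm1 p3 unfolding arc_def by simp
    moreover have "t - 1 < Suc (Suc (Suc t))" by simp
    ultimately show ?thesis
    proof -
      assume e: "arc ?L' (Suc (Suc (Suc t))) = arc ?L' (t-1)" and lt: "t - 1 < Suc (Suc (Suc t))"
      show ?thesis
      proof
        assume H: "norep ?L' (t+3)"
        have "arc ?L' (t-1) \<noteq> arc ?L' (Suc (Suc (Suc t)))"
          using H[unfolded norep_def, rule_format, of "t-1" "Suc (Suc (Suc t))"] lt by simp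
        thus False using e by simp
      qed
    qed
  qed
qed

end


lemma card_fiber:
  assumes "finite A" "\<And>y. y \<in> f ` A \<Longrightarrow> card {x \<in> A. f x = y} \<le> n"
  shows "card A \<le> n * card (f ` A)"
proof -
  have e: "A = (\<Union>y\<in>f ` A. {x \<in> A. f x = y})" by blast
  have "card A = card (\<Union>y\<in>f ` A. {x \<in> A. f x = y})" using e by (rule arg_cong)
  also have "\<dots> \<le> (\<Sum>y\<in>f ` A. card {x \<in> A. f x = y})"
    by (rule card_UN_le) (rule finite_imageI[OF assms(1)])
  finally have "card A \<le> (\<Sum>y\<in>f ` A. card {x \<in> A. f x = y})" .
  also have "\<dots> \<le> (\<Sum>y\<in>f ` A. n)" by (rule sum_mono) (rule assms(2))
  also have "\<dots> = n * card (f ` A)" by simp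
  finally show ?thesis .
qed

lemma card_ins_LL: "card (insert undefined (local_labelings a)) \<le> 257"
proof -
  have "card (insert undefined (local_labelings a)) \<le> Suc (card (local_labelings a))"
    by (rule card_insert_le_m1) simp_all
  thus ?thesis using card_LL[of a] by simp
qed

lemma card_G:
  assumes "finite J"
  shows "card {f \<in> PiE J local_labelings. \<forall>x. x \<noteq> a \<longrightarrow> x \<noteq> b \<longrightarrow> f x = h x} \<le> 257 * 257"
proof -
  let ?G = "{f \<in> PiE J local_labelings. \<forall>x. x \<noteq> a \<longrightarrow> x \<noteq> b \<longrightarrow> f x = h x}"
  let ?S = "insert undefined (local_labelings a) \<times> insert undefined (local_labelings b)"
  let ?g = "\<lambda>(p,q). h(a := p, b := q)"
  have "?G \<subseteq> ?g ` ?S"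
  proof
    fix f assume f: "f \<in> ?G"
    have f1: "f \<in> PiE J local_labelings \<and> (\<forall>x. x \<noteq> a \<longrightarrow> x \<noteq> b \<longrightarrow> f x = h x)" using f by (rule CollectD)
    have fh: "f x = h x" if "x \<noteq> a" "x \<noteq> b" for x using conjunct2[OF f1, rule_format, OF that] .
    have fP: "f \<in> PiE J local_labelings" using f1 by (rule conjunct1)
    have mem: "f c \<in> insert undefined (local_labelings c)" for c
    proof (cases "c \<in> J")
      case True thus ?thesis using PiE_mem[OF fP True] by simp
    next
      case False thus ?thesis using PiE_arb[OF fP False] by simp
    qed
    have "f = h(a := f a, b := f b)"
    proof
      fix x show "f x = (h(a := f a, b := f b)) x"
      proof (cases "x = b")
        case True thus ?thesis by simp
      next
        case False thus ?thesis using fh[of x] by (cases "x = a") simp_all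
      qed
    qed
    hence e1: "f = ?g (f a, f b)" by simp
    have e2: "(f a, f b) \<in> ?S" using mem[of a] mem[of b] by (rule SigmaI)
    show "f \<in> ?g ` ?S" using e1 e2 by (rule image_eqI)
  qed
  moreover have "finite ?S" by (simp add: finite_LL)
  ultimately have "card ?G \<le> card (?g ` ?S)" by (intro card_mono finite_imageI)
  also have "\<dots> \<le> card ?S" using \<open>finite ?S\<close> by (rule card_image_le)
  also have "\<dots> = card (insert undefined (local_labelings a)) * card (insert undefined (local_labelings b))"
    by (rule card_cartesian_product)
  also have "\<dots> \<le> 257 * 257" using card_ins_LL by (intro mult_le_mono) simp_all
  finally show ?thesis .
qed

lemma nbr_box: assumes "x \<in> walk.box v0 r" "y \<in> nbrs x" shows "y \<in> walk.box v0 (r+1)"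
proof -
  have st: "\<bar>fst y - fst x\<bar> + \<bar>snd y - snd x\<bar> = 1" using nbrs_step[OF assms(2)] .
  have "\<bar>fst x - fst v0\<bar> \<le> r" "\<bar>snd x - snd v0\<bar> \<le> r" using assms(1) unfolding walk.box_def by simp_all
  hence "\<bar>fst y - fst v0\<bar> \<le> r + 1 \<and> \<bar>snd y - snd v0\<bar> \<le> r + 1" using st by arith
  thus ?thesis unfolding walk.box_def by simp
qed

context walk begin

definition J :: "nat \<Rightarrow> vertex set" where "J B = box (int B + 5)"
definition F :: "nat \<Rightarrow> (vertex \<Rightarrow> vertex \<Rightarrow> nat) set" where "F B = PiE (J B) local_labelings"
definition SEp where "SEp k B = {L \<in> F B. Ep k B L}"
definition SE where "SE k B = {L \<in> F B. E k B L}"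
definition tf where "tf k B L = (SOME t. t \<le> B \<and> 1 \<le> t \<and> fresh L t \<and> cnt L t = k \<and> norep L (t - 1))"
definition Phi where "Phi k B L = modf L (tf k B L)"

lemma finite_J: "finite (J B)" unfolding J_def by (rule finite_box)
lemma finite_F: "finite (F B)" unfolding F_def using finite_J by (intro finite_PiE) (simp_all add: finite_LL)

lemma F_valid: assumes "L \<in> F B" "x \<in> J B" shows "L x \<in> local_labelings x"
  using assms unfolding F_def by (simp add: PiE_iff)

lemma F_pos: assumes "L \<in> F B" "s \<le> B + 5" shows "pos L s \<in> J B" "pos L s \<in> box (int s)"
proof -
  have v: "\<forall>x\<in>box (int B + 5). L x \<in> local_labelings x" using F_valid[OF assms(1)] unfolding J_def by blast
  show b: "pos L s \<in> box (int s)" using pos_box[OF v] assms(2) by simp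
  have "int s \<le> int B + 5" using assms(2) by simp
  thus "pos L s \<in> J B" using b box_mono[of "int s" "int B + 5"] unfolding J_def by (rule_tac subsetD) 
qed

lemma tf_props: assumes "Ep k B L"
  shows "tf k B L \<le> B \<and> 1 \<le> tf k B L \<and> fresh L (tf k B L) \<and> cnt L (tf k B L) = k \<and> norep L (tf k B L - 1)"
proof -
  have "\<exists>t. t \<le> B \<and> 1 \<le> t \<and> fresh L t \<and> cnt L t = k \<and> norep L (t - 1)" using assms unfolding Ep_def by blast
  thus ?thesis unfolding tf_def by (rule someI_ex)
qed

end


context walk begin

lemma phi_main:
  assumes L: "L \<in> SEp k B"
  defines "t \<equiv> tf k B L"
  shows "Phi k B L \<in> F B" "\<And>s. s \<le> t \<Longrightarrow> pos (Phi k B L) s = pos L s"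
    "\<And>x. x \<noteq> pos L t \<Longrightarrow> x \<noteq> ahead (pos L (t-1)) (pos L t) \<Longrightarrow> Phi k B L x = L x"
    "fresh (Phi k B L) t" "cnt (Phi k B L) t = k" "Ep k B (Phi k B L)" "\<not> E k B (Phi k B L)"
proof -
  have LF: "L \<in> F B" and LE: "Ep k B L" using L unfolding SEp_def by simp_all
  have tp: "t \<le> B" "1 \<le> t" "fresh L t" "cnt L t = k" "norep L (t - 1)"
    using tf_props[OF LE] unfolding t_def by simp_all
  have hv: "L (pos L s) \<in> local_labelings (pos L s)" if "s \<le> t" for s
    using F_valid[OF LF F_pos(1)[OF LF]] that tp(1) by simp
  define u where "u = pos L (t-1)"
  define v where "v = pos L t"
  define w where "w = ahead u v"
  have tS: "Suc (t-1) = t" using tp(2) by simp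
  have "v \<in> nbrs u" using pos_step(1)[of L "t-1", OF hv[of "t-1"]] unfolding u_def v_def tS by simp
  hence uv: "u \<in> nbrs v" by (rule nbrs_sym)
  have wn: "w \<in> nbrs v" using geo(1)[OF uv] unfolding w_def by simp
  have vJ: "v \<in> J B" unfolding v_def using F_pos(1)[OF LF] tp(1) by simp
  have vb: "v \<in> box (int t)" unfolding v_def using F_pos(2)[OF LF] tp(1) by simp
  have "w \<in> box (int t + 1)" using nbr_box[OF vb wn] .
  moreover have "box (int t + 1) \<subseteq> J B" unfolding J_def using tp(1) by (intro box_mono) simp
  ultimately have wJ: "w \<in> J B" by (rule subsetD[rotated])
  have hw: "L w \<in> local_labelings w" using F_valid[OF LF wJ] .
  have hw': "L (ahead (pos L (t-1)) (pos L t)) \<in> local_labelings (ahead (pos L (t-1)) (pos L t))"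
    using hw unfolding w_def u_def v_def .
  note mp = modf_props[OF hv hw' tp(2) tp(3)]
  have Ph: "Phi k B L = modf L t" unfolding Phi_def t_def ..
  show P3: "\<And>x. x \<noteq> pos L t \<Longrightarrow> x \<noteq> ahead (pos L (t-1)) (pos L t) \<Longrightarrow> Phi k B L x = L x"
    unfolding Ph by (rule mp(3))
  show "Phi k B L \<in> F B" unfolding F_def
  proof (rule PiE_I)
    fix x assume xJ: "x \<in> J B"
    show "Phi k B L x \<in> local_labelings x"
    proof (cases "x = v")
      case True thus ?thesis using mp(1) unfolding Ph v_def by simp
    next
      case xv: False
      show ?thesis
      proof (cases "x = w")
        case True thus ?thesis using mp(2) unfolding Ph w_def u_def v_def by simp
      next
        case False thus ?thesis using P3[of x] xv F_valid[OF LF xJ] unfolding w_def u_def v_def by simp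
      qed
    qed
  next
    fix x assume xJ: "x \<notin> J B"
    hence "x \<noteq> v" "x \<noteq> w" using vJ wJ by blast+
    hence "Phi k B L x = L x" using P3[of x] unfolding w_def u_def v_def by simp
    thus "Phi k B L x = undefined" using PiE_arb[OF LF[unfolded F_def] xJ] by simp
  qed
  show hp: "\<And>s. s \<le> t \<Longrightarrow> pos (Phi k B L) s = pos L s" unfolding Ph by (rule mp(4))
  note cl = cong_lemmas[of t "Phi k B L" L, OF hp]
  show fr: "fresh (Phi k B L) t" using cl(1)[of t] tp(3) by simp
  show cn: "cnt (Phi k B L) t = k" using cl(2)[of t] tp(4) by simp
  have nr: "norep (Phi k B L) (t - 1)" using cl(3)[of "t-1"] tp(5) tp(2) by simp
  show "Ep k B (Phi k B L)" unfolding Ep_def using tp(1,2) fr cn nr by (intro exI[of _ t]) simp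
  show "\<not> E k B (Phi k B L)"
  proof
    assume "E k B (Phi k B L)"
    then obtain t' where t': "fresh (Phi k B L) t'" "cnt (Phi k B L) t' = k" "norep (Phi k B L) (t' + 3)"
      unfolding E_def by blast
    have "t' = t" using fresh_unique[OF t'(1) fr] t'(2) cn by simp
    thus False using t'(3) mp(5) unfolding Ph by simp
  qed
qed

lemma SE_sub: "SE k B \<subseteq> SEp k B"
  unfolding SE_def SEp_def using E_Ep by blast

lemma card_main: "card (SEp k B) \<le> 66049 * card (SEp k B - SE k B)"
proof -
  have fin: "finite (SEp k B)" unfolding SEp_def using finite_F by simp
  have "card (SEp k B) \<le> 66049 * card (Phi k B ` SEp k B)"
  proof (rule card_fiber[OF fin])
    fix h assume "h \<in> Phi k B ` SEp k B"
    then obtain L0 where L0: "L0 \<in> SEp k B" "h = Phi k B L0" by blast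
    define t0 where "t0 = tf k B L0"
    let ?a = "pos L0 t0" and ?b = "ahead (pos L0 (t0-1)) (pos L0 t0)"
    have "{L \<in> SEp k B. Phi k B L = h} \<subseteq> {f \<in> PiE (J B) local_labelings. \<forall>x. x \<noteq> ?a \<longrightarrow> x \<noteq> ?b \<longrightarrow> f x = h x}"
    proof
      fix L assume "L \<in> {L \<in> SEp k B. Phi k B L = h}"
      hence L: "L \<in> SEp k B" "Phi k B L = h" by simp_all
      define t1 where "t1 = tf k B L"
      have f1: "fresh h t1" "cnt h t1 = k" using phi_main(4,5)[OF L(1)] L(2) unfolding t1_def by simp_all
      have f0: "fresh h t0" "cnt h t0 = k" using phi_main(4,5)[OF L0(1)] L0(2) unfolding t0_def by simp_all
      have tt: "t1 = t0" using fresh_unique[OF f1(1) f0(1)] f1(2) f0(2) by simp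
      have ps: "pos L s = pos L0 s" if "s \<le> t0" for s
        using phi_main(2)[OF L(1), of s] phi_main(2)[OF L0(1), of s] that L(2) L0(2) tt
        unfolding t1_def t0_def by simp
      have "\<forall>x. x \<noteq> ?a \<longrightarrow> x \<noteq> ?b \<longrightarrow> L x = h x"
      proof (intro allI impI)
        fix x assume "x \<noteq> ?a" "x \<noteq> ?b"
        hence "x \<noteq> pos L t1" "x \<noteq> ahead (pos L (t1-1)) (pos L t1)" using ps[of t0] ps[of "t0-1"] tt by simp_all
        thus "L x = h x" using phi_main(3)[OF L(1), of x] L(2) unfolding t1_def by simp
      qed
      moreover have "L \<in> PiE (J B) local_labelings" using L(1) unfolding SEp_def F_def by simp
      ultimately show "L \<in> {f \<in> PiE (J B) local_labelings. \<forall>x. x \<noteq> ?a \<longrightarrow> x \<noteq> ?b \<longrightarrow> f x = h x}" by simp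
    qed
    hence "card {L \<in> SEp k B. Phi k B L = h} \<le> card {f \<in> PiE (J B) local_labelings. \<forall>x. x \<noteq> ?a \<longrightarrow> x \<noteq> ?b \<longrightarrow> f x = h x}"
      by (rule card_mono[rotated]) (intro finite_subset[OF _ finite_F[of B, unfolded F_def]]; blast)
    also have "\<dots> \<le> 257 * 257" by (rule card_G[OF finite_J])
    finally show "card {L \<in> SEp k B. Phi k B L = h} \<le> 66049" by simp
  qed
  also have "card (Phi k B ` SEp k B) \<le> card (SEp k B - SE k B)"
  proof (rule card_mono)
    show "finite (SEp k B - SE k B)" using fin by simp
    show "Phi k B ` SEp k B \<subseteq> SEp k B - SE k B"
    proof
      fix h assume "h \<in> Phi k B ` SEp k B"
      then obtain L where L: "L \<in> SEp k B" "h = Phi k B L" by blast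
      show "h \<in> SEp k B - SE k B" unfolding SEp_def SE_def using phi_main(1,6,7)[OF L(1)] L(2) by simp
    qed
  qed
  hence "66049 * card (Phi k B ` SEp k B) \<le> 66049 * card (SEp k B - SE k B)" by simp
  finally show ?thesis .
qed

lemma card_SE: "66049 * card (SE k B) \<le> 66048 * card (SEp k B)"
proof -
  have fin: "finite (SEp k B)" unfolding SEp_def using finite_F by simp
  have "card (SEp k B - SE k B) = card (SEp k B) - card (SE k B)"
    using card_Diff_subset[OF finite_subset[OF SE_sub fin] SE_sub] .
  moreover have "card (SE k B) \<le> card (SEp k B)" using card_mono[OF fin SE_sub] .
  ultimately show ?thesis using card_main[of k B] by linarith
qed

lemma card_step: assumes "1 \<le> k" shows "card (SEp (k+4) B) \<le> card (SE k B)"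
proof (rule card_mono)
  show "finite (SE k B)" unfolding SE_def using finite_F by simp
  show "SEp (k + 4) B \<subseteq> SE k B" unfolding SEp_def SE_def using Ep_E[OF assms] by blast
qed

lemma card_decay: "66049^j * card (SEp (4*j+1) B) \<le> 66048^j * card (F B)"
proof (induction j)
  case 0
  have "card (SEp 1 B) \<le> card (F B)" unfolding SEp_def using finite_F by (intro card_mono) auto
  thus ?case by simp
next
  case (Suc j)
  have e: "4 * Suc j + 1 = (4*j+1) + 4" by simp
  have "66049^(Suc j) * card (SEp (4 * Suc j + 1) B) = 66049^j * (66049 * card (SEp ((4*j+1)+4) B))"
    unfolding e by simp
  also have "\<dots> \<le> 66049^j * (66049 * card (SE (4*j+1) B))"
    using card_step[of "4*j+1" B] by simp
  also have "\<dots> \<le> 66049^j * (66048 * card (SEp (4*j+1) B))"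
    using card_SE[of "4*j+1" B] by simp
  also have "\<dots> = 66048 * (66049^j * card (SEp (4*j+1) B))" by simp
  also have "\<dots> \<le> 66048 * (66048^j * card (F B))" using Suc.IH by simp
  also have "\<dots> = 66048^(Suc j) * card (F B)" by simp
  finally show ?case .
qed

end


definition Mv :: "vertex \<Rightarrow> (vertex \<Rightarrow> nat) measure" where
  "Mv v = measure_pmf (pmf_of_set (local_labelings v))"

lemma RL_eq: "random_labeling = PiM UNIV Mv"
  unfolding random_labeling_def Mv_def ..

lemma Mv_prob: "prob_space (Mv i)" unfolding Mv_def by (rule prob_space_measure_pmf)

lemma PPS: "product_prob_space Mv"
proof (intro product_prob_space.intro product_sigma_finite.intro product_prob_space_axioms.intro)
  fix i show "sigma_finite_measure (Mv i)" using Mv_prob by (rule prob_space_imp_sigma_finite)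
  show "prob_space (Mv i)" by (rule Mv_prob)
qed

lemma RL_prob: "prob_space random_labeling"
  unfolding RL_eq by (rule prob_space_PiM) (rule Mv_prob)

lemma sets_Mv: "sets (Mv v) = UNIV" unfolding Mv_def by simp
lemma space_Mv: "space (Mv v) = UNIV" unfolding Mv_def by simp

lemma space_RL: "space random_labeling = UNIV"
  unfolding RL_eq space_PiM space_Mv by simp

definition cyl :: "vertex set \<Rightarrow> (vertex \<Rightarrow> vertex \<Rightarrow> nat) set \<Rightarrow> (vertex \<Rightarrow> vertex \<Rightarrow> nat) set" where
  "cyl J X = {L. restrict L J \<in> X}"

lemma cyl_single: assumes "g \<in> extensional J"
  shows "cyl J {g} = prod_emb UNIV Mv J (PiE J (\<lambda>j. {g j}))"
proof -
  have "restrict L J \<in> PiE J (\<lambda>j. {g j}) \<longleftrightarrow> restrict L J = g" for L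
  proof
    assume h: "restrict L J \<in> PiE J (\<lambda>j. {g j})"
    show "restrict L J = g"
    proof (rule extensionalityI[of _ J])
      show "restrict L J \<in> extensional J" by simp
      show "g \<in> extensional J" by (rule assms)
      fix x assume "x \<in> J" thus "restrict L J x = g x" using PiE_mem[OF h] by blast
    qed
  next
    assume h: "restrict L J = g"
    show "restrict L J \<in> PiE J (\<lambda>j. {g j})"
    proof (rule PiE_I)
      fix x assume "x \<in> J" thus "restrict L J x \<in> {g x}" using h by simp
    next
      fix x assume "x \<notin> J" thus "restrict L J x = undefined" by simp
    qed
  qed
  thus ?thesis unfolding cyl_def prod_emb_def space_Mv by auto
qed

lemma cyl_single_sets: assumes "finite J" "g \<in> extensional J" shows "cyl J {g} \<in> sets random_labeling"
  unfolding cyl_single[OF assms(2)] RL_eq by (rule sets_PiM_I) (simp_all add: assms(1) sets_Mv)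

definition qJ :: "vertex set \<Rightarrow> real" where "qJ J = (\<Prod>j\<in>J. 1 / real (card (local_labelings j)))"

lemma cyl_single_measure: assumes "finite J" "g \<in> PiE J local_labelings"
  shows "measure random_labeling (cyl J {g}) = qJ J"
proof -
  interpret P: product_prob_space Mv UNIV by (rule PPS)
  have ge: "g \<in> extensional J" using assms(2) by (simp add: PiE_iff)
  have "measure random_labeling (cyl J {g}) = (\<Prod>j\<in>J. measure (Mv j) {g j})"
    unfolding cyl_single[OF ge] RL_eq by (rule P.measure_PiM_emb) (simp_all add: assms(1) sets_Mv)
  also have "\<dots> = qJ J" unfolding qJ_def
  proof (rule prod.cong[OF refl])
    fix j assume "j \<in> J"
    hence "g j \<in> local_labelings j" using assms(2) by (simp add: PiE_iff)
    thus "measure (Mv j) {g j} = 1 / real (card (local_labelings j))"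
      unfolding Mv_def measure_pmf_single using finite_LL LL_nonempty by simp
  qed
  finally show ?thesis .
qed

lemma cyl_measure: assumes "finite J" "X \<subseteq> PiE J local_labelings"
  shows "cyl J X \<in> sets random_labeling" "measure random_labeling (cyl J X) = real (card X) * qJ J"
proof -
  have finX: "finite X" using assms by (meson finite_LL finite_PiE finite_subset)
  have U: "cyl J X = (\<Union>g\<in>X. cyl J {g})" unfolding cyl_def by auto
  have ext: "g \<in> extensional J" if "g \<in> X" for g using that assms(2) by (auto simp: PiE_iff)
  have S: "(\<lambda>g. cyl J {g}) ` X \<subseteq> sets random_labeling" using cyl_single_sets[OF assms(1) ext] by blast
  show "cyl J X \<in> sets random_labeling" unfolding U using S finX by (intro sets.finite_UN) auto
  interpret R: prob_space random_labeling by (rule RL_prob)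
  have "measure random_labeling (cyl J X) = (\<Sum>g\<in>X. measure random_labeling (cyl J {g}))"
    unfolding U
  proof (rule measure_finite_Union[OF finX S])
    show "disjoint_family_on (\<lambda>g. cyl J {g}) X" unfolding disjoint_family_on_def cyl_def by auto
    show "\<And>i. i \<in> X \<Longrightarrow> emeasure random_labeling (cyl J {i}) \<noteq> \<infinity>" by (simp add: R.emeasure_eq_measure)
  qed
  also have "\<dots> = (\<Sum>g\<in>X. qJ J)" using cyl_single_measure[OF assms(1)] assms(2) by (intro sum.cong) auto
  also have "\<dots> = real (card X) * qJ J" by simp
  finally show "measure random_labeling (cyl J X) = real (card X) * qJ J" .
qed


lemma Mv_meas: "g \<in> measurable (Mv x) (count_space UNIV)"
  apply (subst measurable_cong_sets[where M'="count_space UNIV" and N'="count_space UNIV"])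
    apply (simp add: sets_Mv)
   apply simp
  apply simp
  done

lemma comp_meas: "(\<lambda>L. g (L x)) \<in> measurable random_labeling (count_space UNIV)"
  unfolding RL_eq by (rule measurable_compose[OF measurable_component_singleton[of x UNIV Mv] Mv_meas]) simp

lemma t1: "(\<lambda>L. (w, THE u. u \<in> nbrs w \<and> L w u = c mod deg w + 1)) \<in> measurable random_labeling (count_space UNIV)"
  using comp_meas[of "\<lambda>f. (w, THE u. u \<in> nbrs w \<and> f u = c mod deg w + 1)" w] by simp
lemma t2: "(\<lambda>L. L v w) \<in> measurable random_labeling (count_space UNIV)"
      using comp_meas[of "\<lambda>f. f w" v] by simp
lemma t3: "(\<lambda>L. (v0, THE w. w \<in> nbrs v0 \<and> L v0 w = l)) \<in> measurable random_labeling (count_space UNIV)"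
  using comp_meas[of "\<lambda>f. (v0, THE w. w \<in> nbrs v0 \<and> f w = l)" v0] by simp

lemma bw_meas: "(\<lambda>L. basic_walk L v0 l n) \<in> measurable random_labeling (count_space UNIV)"
proof (induction n)
  case 0 show ?case using t3 by simp
next
  case (Suc n)
  define f where "f = (\<lambda>(i::vertex \<times> vertex) (L::vertex \<Rightarrow> vertex \<Rightarrow> nat). case i of (v, w) \<Rightarrow>
        (w, THE u. u \<in> nbrs w \<and> L w u = L v w mod deg w + 1))"
  have fm: "(\<lambda>L. f i L) \<in> measurable random_labeling (count_space UNIV)" for i
  proof -
    obtain v w where i: "i = (v, w)" by (cases i)
    have m: "(\<lambda>x. (\<lambda>c L. (w, THE u. u \<in> nbrs w \<and> L w u = c mod deg w + 1)) (x v w) x) \<in> measurable random_labeling (count_space UNIV)"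
      by (rule measurable_compose_countable[of "\<lambda>c L. (w, THE u. u \<in> nbrs w \<and> L w u = c mod deg w + 1)" random_labeling "count_space UNIV" "\<lambda>L. L v w", OF t1 t2])
    have "(\<lambda>L. f i L) = (\<lambda>x. (\<lambda>c L. (w, THE u. u \<in> nbrs w \<and> L w u = c mod deg w + 1)) (x v w) x)"
      unfolding f_def i by simp
    thus ?thesis using m by simp
  qed
  have m2: "(\<lambda>x. f (basic_walk x v0 l n) x) \<in> measurable random_labeling (count_space UNIV)"
    by (rule measurable_compose_countable[of f random_labeling "count_space UNIV" "\<lambda>L. basic_walk L v0 l n", OF fm Suc.IH])
  have "(\<lambda>L. basic_walk L v0 l (Suc n)) = (\<lambda>x. f (basic_walk x v0 l n) x)"
    by (rule ext) (simp add: f_def)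
  thus ?case using m2 by simp
qed

lemma cycles_sets: "{L \<in> space random_labeling. walk_cycles L v0 l} \<in> sets random_labeling"
proof -
  have eq: "Measurable.pred random_labeling (\<lambda>L. basic_walk L v0 l m = basic_walk L v0 l n)" for m n
  proof -
    have "(\<lambda>L. a = basic_walk L v0 l n) \<in> measurable random_labeling (count_space UNIV)" for a :: "vertex \<times> vertex"
      using measurable_compose[OF bw_meas[of v0 l n] measurable_count_space[of "\<lambda>b. a = b" UNIV]] by simp
    from measurable_compose_countable[of "\<lambda>a L. a = basic_walk L v0 l n", OF this bw_meas[of v0 l m]]
    show ?thesis by simp
  qed
  have "Measurable.pred random_labeling (\<lambda>L. walk_cycles L v0 l)"
    unfolding walk_cycles_def
    apply (rule pred_intros_countable(2))
    apply (rule pred_intros_countable(2))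
    apply (rule pred_intros_logic(3))
     apply (rule measurable_const)
     apply simp
    apply (rule eq)
    done
  thus ?thesis unfolding pred_def .
qed


definition validL :: "(vertex \<Rightarrow> vertex \<Rightarrow> nat) \<Rightarrow> bool" where
  "validL L = (\<forall>x. L x \<in> local_labelings x)"

lemma valid_sets: "{L \<in> space random_labeling. validL L} \<in> sets random_labeling"
proof -
  have "Measurable.pred random_labeling (\<lambda>L. \<forall>x. L x \<in> local_labelings x)"
    by (intro pred_intros_countable) (rule comp_meas)
  thus ?thesis unfolding pred_def validL_def .
qed

lemma valid_null: "measure random_labeling {L \<in> space random_labeling. \<not> validL L} = 0"
proof -
  interpret P: product_prob_space Mv UNIV by (rule PPS)
  have "AE L in random_labeling. L x \<in> local_labelings x" for x
  proof -
    have s: "{L \<in> space random_labeling. L x \<in> - local_labelings x} \<in> sets random_labeling"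
      using comp_meas[of "\<lambda>f. f \<in> - local_labelings x" x] unfolding pred_def by simp
    have "emeasure random_labeling {L \<in> space random_labeling. L x \<in> - local_labelings x} = emeasure (Mv x) (- local_labelings x)"
      unfolding RL_eq by (rule P.emeasure_PiM_Collect_single) (simp_all add: sets_Mv)
    also have "\<dots> = 0" unfolding Mv_def using finite_LL LL_nonempty by (simp add: emeasure_pmf_of_set)
    finally show ?thesis using AE_iff_measurable[OF s] by simp
  qed
  hence "AE L in random_labeling. validL L" unfolding validL_def by (simp add: AE_all_countable)
  moreover have s: "{L \<in> space random_labeling. \<not> validL L} \<in> sets random_labeling"
  proof -
    have "{L \<in> space random_labeling. \<not> validL L} = space random_labeling - {L \<in> space random_labeling. validL L}"
      by blast
    thus ?thesis using sets.Diff[OF sets.top valid_sets] by simp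
  qed
  ultimately have "emeasure random_labeling {L \<in> space random_labeling. \<not> validL L} = 0"
    using AE_iff_measurable[OF s refl] by simp
  thus ?thesis by (simp add: measure_def)
qed


context walk begin

lemma restr_F: assumes "validL L" shows "restrict L (J B) \<in> F B"
  unfolding F_def restrict_PiE_iff using assms unfolding validL_def by blast

lemma restr_Ep: assumes "validL L" shows "Ep k B (restrict L (J B)) = Ep k B L"
proof (rule Ep_cong)
  have v: "\<forall>x\<in>box (int B + 5). L x \<in> local_labelings x" using assms unfolding validL_def by blast
  have inJ: "pos L s \<in> J B" if "s \<le> B + 4" for s
  proof -
    have "pos L s \<in> box (int s)" using pos_box[OF v] that by simp
    moreover have "box (int s) \<subseteq> J B" unfolding J_def using that by (intro box_mono) simp
    ultimately show ?thesis by (rule subsetD[rotated])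
  qed
  have "nxt (restrict L (J B)) (pos L s) (P l s) = nxt L (pos L s) (P l s)" if "s < B + 4" for s
    using inJ[of s] that by (intro nxt_cong) simp
  thus "\<And>s. s \<le> B + 4 \<Longrightarrow> pos (restrict L (J B)) s = pos L s"
    by (rule pos_local[of "B+4" "restrict L (J B)" L])
qed

lemma meas_bound:
  assumes l: "l \<in> {1..4}"
  shows "measure random_labeling (space random_labeling - {L \<in> space random_labeling. walk_cycles L v0 l})
           \<le> (66048 / 66049) ^ j"
proof -
  interpret R: prob_space random_labeling by (rule RL_prob)
  define k where "k = 4 * j + 1"
  define c :: real where "c = (66048 / 66049) ^ j"
  define A where "A B = {L. validL L} \<inter> cyl (J B) (SEp k B)" for B
  define V where "V = {L \<in> space random_labeling. validL L}"
  have Vs: "V \<in> sets random_labeling" unfolding V_def by (rule valid_sets)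
  have V': "V = {L. validL L}" unfolding V_def space_RL by simp
  have SF: "SEp k B \<subseteq> PiE (J B) local_labelings" for B unfolding SEp_def F_def by blast
  have cs: "cyl (J B) (SEp k B) \<in> sets random_labeling" for B by (rule cyl_measure(1)[OF finite_J SF])
  have As: "A B \<in> sets random_labeling" for B unfolding A_def using Vs cs V' by (metis sets.Int)
  have Ainc: "incseq A"
  proof (rule incseq_SucI)
    fix B show "A B \<subseteq> A (Suc B)"
    proof
      fix L assume "L \<in> A B"
      hence L: "validL L" "restrict L (J B) \<in> SEp k B" unfolding A_def cyl_def by simp_all
      have "Ep k B L" using L(2) restr_Ep[OF L(1)] unfolding SEp_def by simp
      hence "Ep k (Suc B) L" by (rule Ep_mono) simp
      hence "restrict L (J (Suc B)) \<in> SEp k (Suc B)"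
        unfolding SEp_def using restr_Ep[OF L(1)] restr_F[OF L(1)] by simp
      thus "L \<in> A (Suc B)" unfolding A_def cyl_def using L(1) by simp
    qed
  qed
  have Ab: "measure random_labeling (A B) \<le> c" for B
  proof -
    have "measure random_labeling (A B) \<le> measure random_labeling (cyl (J B) (SEp k B))"
      unfolding A_def by (rule R.finite_measure_mono[OF _ cs]) blast
    also have "\<dots> = real (card (SEp k B)) * qJ (J B)" by (rule cyl_measure(2)[OF finite_J SF])
    also have "\<dots> \<le> (c * real (card (F B))) * qJ (J B)"
    proof (rule mult_right_mono)
      show "0 \<le> qJ (J B)" unfolding qJ_def by (intro prod_nonneg) simp
      have "real (66049^j * card (SEp k B)) \<le> real (66048^j * card (F B))"
        unfolding of_nat_le_iff k_def by (rule card_decay)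
      hence h: "66049^j * real (card (SEp k B)) \<le> 66048^j * real (card (F B))" by simp
      have "real (card (SEp k B)) = (66049^j * real (card (SEp k B))) / 66049^j" by simp
      also have "\<dots> \<le> (66048^j * real (card (F B))) / 66049^j"
        using h by (intro divide_right_mono) simp_all
      also have "\<dots> = c * real (card (F B))" unfolding c_def by (simp add: power_divide)
      finally show "real (card (SEp k B)) \<le> c * real (card (F B))" .
    qed
    also have "\<dots> = c * measure random_labeling (cyl (J B) (F B))"
      using cyl_measure(2)[OF finite_J, of "F B" B] unfolding F_def by simp
    also have "\<dots> \<le> c * 1" unfolding c_def by (intro mult_left_mono R.prob_le_1) simp
    finally show ?thesis by simp
  qed
  have lim: "(\<lambda>B. measure random_labeling (A B)) \<longlonglongrightarrow> measure random_labeling (\<Union>B. A B)"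
    using As Ainc by (intro R.finite_Lim_measure_incseq) auto
  have Ub: "measure random_labeling (\<Union>B. A B) \<le> c"
    using Ab by (intro LIMSEQ_le_const2[OF lim]) auto
  have Us: "(\<Union>B. A B) \<in> sets random_labeling" using As by (intro sets.countable_UN) auto
  let ?NC = "space random_labeling - {L \<in> space random_labeling. walk_cycles L v0 l}"
  let ?NV = "{L \<in> space random_labeling. \<not> validL L}"
  have NVs: "?NV \<in> sets random_labeling"
  proof -
    have "?NV = space random_labeling - V" unfolding V_def by blast
    thus ?thesis using sets.Diff[OF sets.top Vs] by simp
  qed
  have sub: "?NC \<subseteq> (\<Union>B. A B) \<union> ?NV"
  proof
    fix L assume L: "L \<in> ?NC"
    show "L \<in> (\<Union>B. A B) \<union> ?NV"
    proof (cases "validL L")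
      case False thus ?thesis using L by simp
    next
      case True
      have vx: "\<And>x. L x \<in> local_labelings x" using True unfolding validL_def by blast
      have "\<not> walk_cycles L v0 l" using L by simp
      hence "\<forall>n. norep L n" using cycles_iff[OF vx l] by simp
      then obtain B where "Ep k B L" using noc_Ep unfolding k_def by fastforce
      hence "restrict L (J B) \<in> SEp k B" unfolding SEp_def using restr_Ep[OF True] restr_F[OF True] by simp
      hence "L \<in> A B" unfolding A_def cyl_def using True by simp
      thus ?thesis by blast
    qed
  qed
  have "measure random_labeling ?NC \<le> measure random_labeling ((\<Union>B. A B) \<union> ?NV)"
    by (rule R.finite_measure_mono[OF sub]) (intro sets.Un Us NVs)
  also have "\<dots> \<le> measure random_labeling (\<Union>B. A B) + measure random_labeling ?NV"
    by (rule measure_Un_le[OF Us NVs])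
  also have "\<dots> \<le> c" using Ub valid_null by simp
  finally show ?thesis unfolding c_def .
qed

lemma main:
  assumes l: "l \<in> {1..4}"
  shows "measure random_labeling {L \<in> space random_labeling. walk_cycles L v0 l} = 1"
proof -
  interpret R: prob_space random_labeling by (rule RL_prob)
  let ?C = "{L \<in> space random_labeling. walk_cycles L v0 l}"
  have lim: "(\<lambda>j. (66048 / 66049 :: real) ^ j) \<longlonglongrightarrow> 0" by (rule LIMSEQ_power_zero) simp
  have "measure random_labeling (space random_labeling - ?C) \<le> 0"
    by (rule LIMSEQ_le_const[OF lim]) (use meas_bound[OF l] in auto)
  hence "measure random_labeling (space random_labeling - ?C) = 0" using measure_nonneg[of random_labeling "space random_labeling - ?C"] by linarith
  moreover have "measure random_labeling (space random_labeling - ?C) = 1 - measure random_labeling ?C"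
    by (rule R.prob_compl[OF cycles_sets])
  ultimately show ?thesis by simp
qed

end

theorem theorem4p1:
  fixes v0 :: vertex and l :: nat
  assumes "l \<in> {1..deg v0}"
  shows "measure random_labeling {L \<in> space random_labeling. walk_cycles L v0 l} = 1"
  using walk.main[of l v0] assms deg4[of v0] by simp


end
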